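(* Assume hypotheses (H1) and (H2) below with constants $0<\delta<1$, $\gamma>0$. Fix a positive integer $r$ and a prime $p$. If $X>p^{\frac{1+\gamma}{1-\delta}}$, then $$\frac{1}{|L(X)^{r_2}|}\sum_{K\in L(X)^{r_2}}a_\rho(p)^r=\frac{n_r}{1+f(p)}+O(p^{-1}),$$ where $n_r$ is the multiplicity of the trivial representation in $\rho^{\otimes r}$, and the implied constant depends only on $r$, $d$ and the constants in (H1), (H2).
   Context: $d\ge2$, $G=S_{d+1}$, $\rho$ the $d$-dimensional standard representation of $S_{d+1}$, fixed signature $(r_1,r_2)$. An $S_{d+1}$-field is a degree $d+1$ number field whose Galois closure has Galois group $S_{d+1}$; $L(s,\rho,K)=\zeta_K(s)/\zeta(s)=\sum a_\rho(n)n^{-s}$ (so $-1\le a_\rho(p)\le d$, and $a_\rho(p)=\chi_\rho(\mathrm{Frob}_p)$ for unramified $p$). $L(X)^{r_2}$ is the set of $S_{d+1}$-fields of signature $(r_1,r_2)$ with $|d_K|<X$, up to isomorphism. Local conditions: $\mathcal S_{p,C}$ ($p$ unramified, $\mathrm{Frob}_p\in C$) with weight $\frac{|C|}{|G|(1+f(p))}$; $\mathcal S_{p,r_i}$ ($p$ ramified of splitting type $r_i$, $i=1,\dots,w$) with weight $\frac{c_i(p)}{1+f(p)}$, where $f(p)=O(1/p)$ positive, $c_i(p)>0$, $\sum_ic_i(p)=f(p)$. For a finite set $\mathcal S$ of local conditions at distinct primes, $|\mathcal S|$ is the product of weights, and $L(X;\mathcal S)^{r_2}$ the subset of $L(X)^{r_2}$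 satisfying them. (H1) $|L(X)^{r_2}|=A(r_2)X+O(X^\delta)$; (H2) $|L(X;\mathcal S)^{r_2}|=|\mathcal S|A(r_2)X+O((\prod_{p\in\mathcal S}p)^\gamma X^\delta)$, uniformly in the primes and local conditions. *)

theory Defs
  imports "HOL-Analysis.Analysis" "HOL-Combinatorics.Permutations" "HOL-Computational_Algebra.Primes"
begin

text \<open>The symmetric group S_{d+1}, realised as permutations of {0..d}.\<close>
definition Sym :: "nat \<Rightarrow> (nat \<Rightarrow> nat) set" where
  "Sym d = {\<sigma>. \<sigma> permutes {0..d}}"

definition conj_class :: "nat \<Rightarrow> (nat \<Rightarrow> nat) \<Rightarrow> (nat \<Rightarrow> nat) set" where
  "conj_class d \<sigma> = {\<tau> \<circ> \<sigma> \<circ> inv \<tau> | \<tau>. \<tau> \<in> Sym d}"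

definition conj_classes :: "nat \<Rightarrow> (nat \<Rightarrow> nat) set set" where
  "conj_classes d = conj_class d ` Sym d"

text \<open>Character of the d-dimensional standard representation of S_{d+1}:
  (number of fixed points on {0..d}) - 1.\<close>
definition chi_std :: "nat \<Rightarrow> (nat \<Rightarrow> nat) \<Rightarrow> int" where
  "chi_std d \<sigma> = int (card {i \<in> {0..d}. \<sigma> i = i}) - 1"

text \<open>Multiplicity of the trivial representation in rho^(tensor r), computed as the
  inner product of the character of rho^(tensor r) with the trivial character.\<close>
definition n_mult :: "nat \<Rightarrow> nat \<Rightarrow> real" where
  "n_mult d r = (\<Sum>\<sigma>\<in>Sym d. real_of_int (chi_std d \<sigma> ^ r)) / fact (d + 1)"

text \<open>Local conditions at a prime: Unr C (p unramified, Frob_p in class C) or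
  Rm i (p ramified with splitting type r_i).\<close>
datatype loccond = Unr "(nat \<Rightarrow> nat) set" | Rm nat

definition valid_cond :: "nat \<Rightarrow> nat \<Rightarrow> loccond \<Rightarrow> bool" where
  "valid_cond d w c = (case c of Unr C \<Rightarrow> C \<in> conj_classes d | Rm i \<Rightarrow> i \<in> {1..w})"

text \<open>Whether the field K satisfies the local condition c at p, given the data
  unram (p unramified in K), frob (a Frobenius element in S_{d+1}), ramtype
  (index of the splitting type at a ramified p).\<close>
definition sat_cond ::
  "('k \<Rightarrow> nat \<Rightarrow> bool) \<Rightarrow> ('k \<Rightarrow> nat \<Rightarrow> (nat \<Rightarrow> nat)) \<Rightarrow> ('k \<Rightarrow> nat \<Rightarrow> nat)
     \<Rightarrow> 'k \<Rightarrow> nat \<Rightarrow> loccond \<Rightarrow> bool" where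
  "sat_cond unram frob ramtype K p c =
     (case c of Unr C \<Rightarrow> unram K p \<and> frob K p \<in> C
              | Rm i \<Rightarrow> \<not> unram K p \<and> ramtype K p = i)"

definition cond_weight ::
  "nat \<Rightarrow> (nat \<Rightarrow> real) \<Rightarrow> (nat \<Rightarrow> nat \<Rightarrow> real) \<Rightarrow> nat \<Rightarrow> loccond \<Rightarrow> real" where
  "cond_weight d f c p cnd =
     (case cnd of Unr C \<Rightarrow> real (card C) / (fact (d + 1) * (1 + f p))
                | Rm i \<Rightarrow> c i p / (1 + f p))"

definition Lset :: "'k set \<Rightarrow> ('k \<Rightarrow> real) \<Rightarrow> real \<Rightarrow> 'k set" where
  "Lset F disc X = {K \<in> F. disc K < X}"

end

theory Submission
  imports Defs
begin


lemma cc_self: "\<sigma> \<in> Sym d \<Longrightarrow> \<sigma> \<in> conj_class d \<sigma>"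
  unfolding conj_class_def Sym_def
  by (rule CollectI, rule exI[of _ id]) (auto simp: permutes_id)

lemma cc_sub: "\<sigma> \<in> Sym d \<Longrightarrow> \<rho> \<in> conj_class d \<sigma> \<Longrightarrow> \<rho> \<in> Sym d"
  unfolding conj_class_def Sym_def
  by (auto intro!: permutes_compose permutes_inv)

lemma cc_trans:
  assumes "\<sigma> \<in> Sym d" "\<rho> \<in> conj_class d \<sigma>"
  shows "conj_class d \<rho> \<subseteq> conj_class d \<sigma>"
proof
  fix x assume "x \<in> conj_class d \<rho>"
  then obtain u where u: "u permutes {0..d}" "x = u \<circ> \<rho> \<circ> inv u" unfolding conj_class_def Sym_def by auto
  obtain t where t: "t permutes {0..d}" "\<rho> = t \<circ> \<sigma> \<circ> inv t" using assms(2) unfolding conj_class_def Sym_def by auto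
  have "x = (u \<circ> t) \<circ> \<sigma> \<circ> inv (u \<circ> t)"
    using u t by (simp add: o_inv_distrib permutes_bij bij_is_inj bij_is_surj o_assoc)
  moreover have "u \<circ> t permutes {0..d}" using u t by (simp add: permutes_compose)
  ultimately show "x \<in> conj_class d \<sigma>" unfolding conj_class_def Sym_def by blast
qed

lemma cc_sym:
  assumes "\<sigma> \<in> Sym d" "\<rho> \<in> conj_class d \<sigma>"
  shows "\<sigma> \<in> conj_class d \<rho>"
proof -
  obtain t where t: "t permutes {0..d}" "\<rho> = t \<circ> \<sigma> \<circ> inv t" using assms(2) unfolding conj_class_def Sym_def by auto
  have "inv t \<circ> \<rho> \<circ> inv (inv t) = \<sigma>"
  proof -
    have "inv t \<circ> t = id" using t(1) by (rule permutes_inv_o(2))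
    moreover have "inv (inv t) = t" using t(1) by (simp add: inv_inv_eq permutes_bij)
    moreover have "t \<circ> inv t = id" using t(1) by (rule permutes_inv_o(1))
    ultimately show ?thesis using t by (simp add: fun_eq_iff permutes_inverses)
  qed
  moreover have "inv t permutes {0..d}" using t by (simp add: permutes_inv)
  ultimately show ?thesis unfolding conj_class_def Sym_def by blast
qed

lemma cc_eq: "\<sigma> \<in> Sym d \<Longrightarrow> \<rho> \<in> conj_class d \<sigma> \<Longrightarrow> conj_class d \<rho> = conj_class d \<sigma>"
  by (meson cc_sub cc_sym cc_trans subset_antisym)

lemma chi_cc:
  assumes "\<sigma> \<in> Sym d" "\<rho> \<in> conj_class d \<sigma>"
  shows "chi_std d \<rho> = chi_std d \<sigma>"
proof -
  obtain t where t: "t permutes {0..d}" "\<rho> = t \<circ> \<sigma> \<circ> inv t" using assms(2) unfolding conj_class_def Sym_def by auto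
  have "{i \<in> {0..d}. \<rho> i = i} = t ` {i \<in> {0..d}. \<sigma> i = i}"
  proof safe
    fix i assume i: "i \<in> {0..d}" "\<rho> i = i"
    have "t (\<sigma> (inv t i)) = i" using i t by simp
    hence "\<sigma> (inv t i) = inv t i" by (metis permutes_inverses(2) t(1))
    moreover have "inv t i \<in> {0..d}" using i t permutes_in_image permutes_inv by metis
    moreover have "i = t (inv t i)" by (metis permutes_inverses(1) t(1))
    ultimately show "i \<in> t ` {i \<in> {0..d}. \<sigma> i = i}" by blast
  next
    fix i assume "i \<in> {0..d}" "\<sigma> i = i"
    thus "t i \<in> {0..d}" using t permutes_in_image by (metis atLeastAtMost_iff zero_le)
    show "\<rho> (t i) = t i" using t \<open>\<sigma> i = i\<close> by (simp add: permutes_inverses(2))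
  qed
  moreover have "inj t" using t by (simp add: permutes_inj)
  ultimately show ?thesis unfolding chi_std_def by (simp add: card_image inj_on_subset)
qed

lemma finite_Sym: "finite (Sym d)"
  unfolding Sym_def by (simp add: finite_permutations)

lemma card_Sym: "card (Sym d) = fact (d+1)"
  unfolding Sym_def by (simp add: card_permutations)

lemma chi_bound: assumes "d \<ge> 1" shows "\<bar>chi_std d \<sigma>\<bar> \<le> int d"
proof -
  have "card {i \<in> {0..d}. \<sigma> i = i} \<le> card {0..d}" by (rule card_mono) auto
  thus ?thesis unfolding chi_std_def using assms by simp
qed



lemma cls_facts:
  assumes "C \<in> conj_classes d"
  shows "C \<subseteq> Sym d" "finite C" "(SOME \<sigma>. \<sigma> \<in> C) \<in> C"
    "\<And>\<sigma>. \<sigma> \<in> C \<Longrightarrow> chi_std d \<sigma> = chi_std d (SOME \<sigma>. \<sigma> \<in> C)"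
proof -
  obtain s where s: "s \<in> Sym d" "C = conj_class d s" using assms unfolding conj_classes_def by auto
  show sub: "C \<subseteq> Sym d" using s cc_sub by blast
  thus "finite C" using finite_Sym finite_subset by blast
  have "s \<in> C" using s cc_self by blast
  thus rC: "(SOME \<sigma>. \<sigma> \<in> C) \<in> C" by (rule someI[where P="\<lambda>x. x \<in> C"])
  fix \<sigma> assume "\<sigma> \<in> C"
  thus "chi_std d \<sigma> = chi_std d (SOME \<sigma>. \<sigma> \<in> C)"
    using chi_cc[OF s(1)] rC s(2) by metis
qed

lemma cls_disj:
  assumes "C1 \<in> conj_classes d" "C2 \<in> conj_classes d" "\<sigma> \<in> C1" "\<sigma> \<in> C2"
  shows "C1 = C2"
proof -
  obtain s1 where s1: "s1 \<in> Sym d" "C1 = conj_class d s1" using assms unfolding conj_classes_def by auto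
  obtain s2 where s2: "s2 \<in> Sym d" "C2 = conj_class d s2" using assms unfolding conj_classes_def by auto
  show ?thesis using cc_eq[OF s1(1)] cc_eq[OF s2(1)] s1(2) s2(2) assms(3,4) by metis
qed

lemma cls_union: "\<Union> (conj_classes d) = Sym d"
  unfolding conj_classes_def using cc_sub cc_self by blast

lemma finite_cls: "finite (conj_classes d)"
  unfolding conj_classes_def using finite_Sym by simp

lemma sum_over_cls:
  fixes g :: "(nat \<Rightarrow> nat) \<Rightarrow> real"
  shows "(\<Sum>\<sigma>\<in>Sym d. g \<sigma>) = (\<Sum>C\<in>conj_classes d. \<Sum>\<sigma>\<in>C. g \<sigma>)"
proof -
  have "(\<Sum>\<sigma>\<in>\<Union>(conj_classes d). g \<sigma>) = (\<Sum>C\<in>conj_classes d. \<Sum>\<sigma>\<in>C. g \<sigma>)"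
  proof -
    have "\<forall>A\<in>conj_classes d. \<forall>B\<in>conj_classes d. A \<noteq> B \<longrightarrow> A \<inter> B = {}"
      using cls_disj by blast
    moreover have "\<forall>A\<in>conj_classes d. finite A" using cls_facts(2) by blast
    ultimately show ?thesis using sum.Union_disjoint[of "conj_classes d" g] by (simp add: o_def)
  qed
  thus ?thesis by (simp add: cls_union)
qed



lemma card_cls_sum: "(\<Sum>C\<in>conj_classes d. real (card C)) = fact (d + 1)"
proof -
  have "(\<Sum>\<sigma>\<in>Sym d. (1::real)) = (\<Sum>C\<in>conj_classes d. \<Sum>\<sigma>\<in>C. 1)" by (rule sum_over_cls)
  thus ?thesis by (simp add: card_Sym algebra_simps)
qed

lemma cv_bound:
  assumes "d \<ge> 1" shows "\<bar>real_of_int (chi_std d \<sigma>)\<bar> ^ r \<le> real d ^ r"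
proof -
  have "\<bar>real_of_int (chi_std d \<sigma>)\<bar> \<le> real d" using chi_bound[OF assms, of \<sigma>]
    by (metis of_int_abs of_int_le_iff of_int_of_nat_eq)
  thus ?thesis by (simp add: power_mono)
qed

lemma nm_bound:
  assumes "d \<ge> 1" shows "\<bar>n_mult d r\<bar> \<le> real d ^ r"
proof -
  have "\<bar>\<Sum>\<sigma>\<in>Sym d. real_of_int (chi_std d \<sigma> ^ r)\<bar> \<le> (\<Sum>\<sigma>\<in>Sym d. real d ^ r)"
  proof (rule order_trans[OF sum_abs], rule sum_mono)
    fix \<sigma> show "\<bar>real_of_int (chi_std d \<sigma> ^ r)\<bar> \<le> real d ^ r"
      using cv_bound[OF assms, of \<sigma> r] by (simp add: power_abs)
  qed
  also have "\<dots> = fact (d+1) * real d ^ r" by (simp add: card_Sym algebra_simps)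
  finally have h: "\<bar>\<Sum>\<sigma>\<in>Sym d. real_of_int (chi_std d \<sigma> ^ r)\<bar> \<le> fact (d+1) * real d ^ r" .
  have Fpos: "(fact (d+1)::real) > 0" by simp
  have "\<bar>\<Sum>\<sigma>\<in>Sym d. real_of_int (chi_std d \<sigma> ^ r)\<bar> / fact (d+1) \<le> real d ^ r"
    using h Fpos by (metis mult.commute pos_divide_le_eq)
  thus ?thesis unfolding n_mult_def using abs_div_pos[OF Fpos] by metis
qed

lemma nm_cls:
  "n_mult d r = (\<Sum>C\<in>conj_classes d. real (card C) * real_of_int (chi_std d (SOME \<sigma>. \<sigma> \<in> C)) ^ r) / fact (d + 1)"
proof -
  have "(\<Sum>\<sigma>\<in>Sym d. real_of_int (chi_std d \<sigma> ^ r))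
      = (\<Sum>C\<in>conj_classes d. \<Sum>\<sigma>\<in>C. real_of_int (chi_std d \<sigma> ^ r))" by (rule sum_over_cls)
  also have "\<dots> = (\<Sum>C\<in>conj_classes d. real (card C) * real_of_int (chi_std d (SOME \<sigma>. \<sigma> \<in> C)) ^ r)"
  proof (rule sum.cong)
    fix C assume C: "C \<in> conj_classes d"
    have "(\<Sum>\<sigma>\<in>C. real_of_int (chi_std d \<sigma> ^ r)) = (\<Sum>\<sigma>\<in>C. real_of_int (chi_std d (SOME \<sigma>. \<sigma> \<in> C)) ^ r)"
      using cls_facts(4)[OF C] by (intro sum.cong) auto
    thus "(\<Sum>\<sigma>\<in>C. real_of_int (chi_std d \<sigma> ^ r)) = real (card C) * real_of_int (chi_std d (SOME \<sigma>. \<sigma> \<in> C)) ^ r"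
      by simp
  qed simp
  finally show ?thesis unfolding n_mult_def by simp
qed



lemma S_bound:
  fixes L :: "'k set" and a :: "'k \<Rightarrow> nat \<Rightarrow> int"
  assumes "\<forall>K\<in>L. -1 \<le> a K p \<and> a K p \<le> int d" "d \<ge> 1"
  shows "\<bar>\<Sum>K\<in>L. real_of_int (a K p) ^ r\<bar> \<le> real d ^ r * real (card L)"
proof -
  have "\<bar>\<Sum>K\<in>L. real_of_int (a K p) ^ r\<bar> \<le> (\<Sum>K\<in>L. real d ^ r)"
  proof (rule order_trans[OF sum_abs], rule sum_mono)
    fix K assume K: "K \<in> L"
    have "\<bar>real_of_int (a K p)\<bar> \<le> real d" using assms K by auto
    thus "\<bar>real_of_int (a K p) ^ r\<bar> \<le> real d ^ r" by (simp add: power_abs power_mono)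
  qed
  thus ?thesis by (simp add: mult.commute)
qed

lemma alg:
  fixes L :: "'k set" and a :: "'k \<Rightarrow> nat \<Rightarrow> int" and unram :: "'k \<Rightarrow> nat \<Rightarrow> bool"
    and frob :: "'k \<Rightarrow> nat \<Rightarrow> (nat \<Rightarrow> nat)" and fz T E E1 :: real
  assumes d1: "d \<ge> 1" and finL: "finite L" and fz: "fz > 0" and T0: "T \<ge> 0"
    and loc: "\<forall>K\<in>L. (unram K p \<longrightarrow> frob K p \<in> Sym d \<and> a K p = chi_std d (frob K p))
                    \<and> -1 \<le> a K p \<and> a K p \<le> int d"
    and H2: "\<forall>C\<in>conj_classes d. \<bar>real (card {K\<in>L. unram K p \<and> frob K p \<in> C})
                 - real (card C) / (fact (d+1) * (1 + fz)) * T\<bar> \<le> E"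
    and H1: "\<bar>real (card L) - T\<bar> \<le> E1"
  shows "\<bar>(\<Sum>K\<in>L. real_of_int (a K p) ^ r) - n_mult d r / (1 + fz) * real (card L)\<bar>
     \<le> real (card (conj_classes d)) * real d ^ r * E
        + real d ^ r * (E1 + T * fz + real (card (conj_classes d)) * E) + real d ^ r * E1"
proof -
  define cls where "cls = conj_classes d"
  define cv :: "(nat \<Rightarrow> nat) set \<Rightarrow> real" where "cv C = real_of_int (chi_std d (SOME \<sigma>. \<sigma> \<in> C)) ^ r" for C
  define UC :: "(nat \<Rightarrow> nat) set \<Rightarrow> 'k set" where "UC C = {K\<in>L. unram K p \<and> frob K p \<in> C}" for C
  define U where "U = {K\<in>L. unram K p}"
  define Fc :: real where "Fc = fact (d+1)"
  define w :: "(nat \<Rightarrow> nat) set \<Rightarrow> real" where "w C = real (card C) / (Fc * (1 + fz))" for C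
  define e :: "(nat \<Rightarrow> nat) set \<Rightarrow> real" where "e C = real (card (UC C)) - w C * T" for C
  define dr where "dr = real d ^ r"
  define k where "k = real (card cls)"
  define a' where "a' = (\<lambda>K. real_of_int (a K p) ^ r)"
  have fincls: "finite cls" unfolding cls_def by (rule finite_cls)
  have Fpos: "Fc > 0" unfolding Fc_def by simp
  have eb: "\<bar>e C\<bar> \<le> E" if "C \<in> cls" for C
    using H2 that unfolding e_def w_def UC_def cls_def Fc_def by auto
  have cvb: "\<bar>cv C\<bar> \<le> dr" for C
    unfolding cv_def dr_def using cv_bound[OF d1] by (simp add: power_abs)
  have U_eq: "U = \<Union> (UC ` cls)"
  proof safe
    fix K assume K: "K \<in> U"
    hence "frob K p \<in> Sym d" using loc unfolding U_def by auto
    hence "frob K p \<in> conj_class d (frob K p)" "conj_class d (frob K p) \<in> cls"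
      using cc_self unfolding cls_def conj_classes_def by auto
    thus "K \<in> \<Union> (UC ` cls)" using K unfolding U_def UC_def by blast
  qed (auto simp: U_def UC_def)
  have UCdisj: "\<forall>i\<in>cls. \<forall>j\<in>cls. i \<noteq> j \<longrightarrow> UC i \<inter> UC j = {}"
    unfolding UC_def cls_def using cls_disj by blast
  have finUC: "\<forall>i\<in>cls. finite (UC i)" unfolding UC_def using finL by auto
  have sumU: "(\<Sum>K\<in>U. a' K) = (\<Sum>C\<in>cls. real (card (UC C)) * cv C)"
  proof -
    have "(\<Sum>K\<in>U. a' K) = (\<Sum>C\<in>cls. \<Sum>K\<in>UC C. a' K)"
      unfolding U_eq by (rule sum.UNION_disjoint[OF fincls finUC UCdisj])
    also have "\<dots> = (\<Sum>C\<in>cls. real (card (UC C)) * cv C)"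
    proof (rule sum.cong)
      fix C assume C: "C \<in> cls"
      have "(\<Sum>K\<in>UC C. a' K) = (\<Sum>K\<in>UC C. cv C)"
      proof (rule sum.cong)
        fix K assume "K \<in> UC C"
        hence "K \<in> L" "unram K p" "frob K p \<in> C" unfolding UC_def by auto
        thus "a' K = cv C" using loc cls_facts(4)[of C d "frob K p"] C
          unfolding a'_def cv_def cls_def by auto
      qed simp
      thus "(\<Sum>K\<in>UC C. a' K) = real (card (UC C)) * cv C" by simp
    qed simp
    finally show ?thesis .
  qed
  have cardU: "real (card U) = (\<Sum>C\<in>cls. real (card (UC C)))"
  proof -
    have "card U = (\<Sum>C\<in>cls. card (UC C))"
      unfolding U_eq by (rule card_UN_disjoint[OF fincls finUC UCdisj])
    thus ?thesis by simp
  qed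
  have sumw: "(\<Sum>C\<in>cls. w C) = 1 / (1 + fz)"
  proof -
    have "(\<Sum>C\<in>cls. w C) = (\<Sum>C\<in>cls. real (card C)) / (Fc * (1 + fz))"
      unfolding w_def by (simp add: sum_divide_distrib)
    also have "\<dots> = 1 / (1 + fz)" unfolding cls_def Fc_def card_cls_sum using fz by simp
    finally show ?thesis .
  qed
  have sumcw: "(\<Sum>C\<in>cls. cv C * w C) = n_mult d r / (1 + fz)"
  proof -
    have "(\<Sum>C\<in>cls. cv C * w C) = (\<Sum>C\<in>cls. real (card C) * cv C) / (Fc * (1 + fz))"
      unfolding w_def by (simp add: sum_divide_distrib mult.commute)
    also have "\<dots> = n_mult d r / (1 + fz)"
      unfolding nm_cls cls_def Fc_def cv_def by simp
    finally show ?thesis .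
  qed
  have step1: "\<bar>(\<Sum>K\<in>U. a' K) - n_mult d r / (1 + fz) * T\<bar> \<le> k * dr * E"
  proof -
    have "(\<Sum>C\<in>cls. cv C * e C) = (\<Sum>C\<in>cls. real (card (UC C)) * cv C - (cv C * w C) * T)"
      by (rule sum.cong) (simp_all add: e_def algebra_simps)
    also have "\<dots> = (\<Sum>C\<in>cls. real (card (UC C)) * cv C) - (\<Sum>C\<in>cls. (cv C * w C) * T)"
      by (rule sum_subtractf)
    also have "(\<Sum>C\<in>cls. (cv C * w C) * T) = (\<Sum>C\<in>cls. cv C * w C) * T"
      by (rule sum_distrib_right[symmetric])
    finally have "(\<Sum>K\<in>U. a' K) - n_mult d r / (1 + fz) * T = (\<Sum>C\<in>cls. cv C * e C)"
      unfolding sumU sumcw by simp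
    also have "\<bar>\<dots>\<bar> \<le> (\<Sum>C\<in>cls. dr * E)"
    proof (rule order_trans[OF sum_abs], rule sum_mono)
      fix C assume C: "C \<in> cls"
      have "\<bar>cv C * e C\<bar> = \<bar>cv C\<bar> * \<bar>e C\<bar>" by (simp add: abs_mult)
      also have "\<dots> \<le> dr * E" using cvb[of C] eb[OF C] by (intro mult_mono) auto
      finally show "\<bar>cv C * e C\<bar> \<le> dr * E" .
    qed
    also have "\<dots> = k * dr * E" unfolding k_def by simp
    finally show ?thesis .
  qed
  have step2: "\<bar>real (card U) - T / (1 + fz)\<bar> \<le> k * E"
  proof -
    have "(\<Sum>C\<in>cls. e C) = (\<Sum>C\<in>cls. real (card (UC C))) - (\<Sum>C\<in>cls. w C * T)"
      unfolding e_def by (rule sum_subtractf)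
    also have "(\<Sum>C\<in>cls. w C * T) = (\<Sum>C\<in>cls. w C) * T"
      by (rule sum_distrib_right[symmetric])
    finally have "real (card U) - T / (1 + fz) = (\<Sum>C\<in>cls. e C)"
      unfolding cardU sumw by simp
    also have "\<bar>\<dots>\<bar> \<le> (\<Sum>C\<in>cls. E)" by (rule order_trans[OF sum_abs], rule sum_mono) (use eb in auto)
    also have "\<dots> = k * E" unfolding k_def by simp
    finally show ?thesis .
  qed
  define R where "R = L - U"
  have UL: "U \<subseteq> L" unfolding U_def by auto
  have cardR: "real (card R) = real (card L) - real (card U)"
    unfolding R_def using UL finL by (simp add: card_Diff_subset finite_subset of_nat_diff card_mono)
  have sumL: "(\<Sum>K\<in>L. a' K) = (\<Sum>K\<in>U. a' K) + (\<Sum>K\<in>R. a' K)"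
    unfolding R_def using sum.subset_diff[OF UL finL, of a'] by simp
  have Tf: "T - T / (1 + fz) \<le> T * fz"
  proof -
    have "T - T / (1 + fz) = T * fz / (1 + fz)" using fz by (simp add: field_simps)
    also have "\<dots> \<le> T * fz" using fz T0 mult_left_mono[of 1 "1 + fz" "T * fz"] by (simp add: divide_le_eq)
    finally show ?thesis .
  qed
  have Rb: "real (card R) \<le> E1 + T * fz + k * E" using cardR H1 step2 Tf by linarith
  have sumR: "\<bar>\<Sum>K\<in>R. a' K\<bar> \<le> dr * (E1 + T * fz + k * E)"
  proof -
    have "\<bar>\<Sum>K\<in>R. a' K\<bar> \<le> dr * real (card R)"
      unfolding a'_def dr_def using S_bound[of R a p d r] loc d1 unfolding R_def by auto
    also have "\<dots> \<le> dr * (E1 + T * fz + k * E)" using Rb unfolding dr_def by (intro mult_left_mono) auto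
    finally show ?thesis .
  qed
  have nmb: "\<bar>n_mult d r / (1 + fz)\<bar> \<le> dr"
  proof -
    have "\<bar>n_mult d r / (1 + fz)\<bar> = \<bar>n_mult d r\<bar> / (1 + fz)" using fz by simp
    also have "\<dots> \<le> \<bar>n_mult d r\<bar>" using fz mult_left_mono[of 1 "1 + fz" "\<bar>n_mult d r\<bar>"] by (simp add: divide_le_eq)
    finally show ?thesis using nm_bound[OF d1, of r] unfolding dr_def by simp
  qed
  have step3: "\<bar>n_mult d r / (1 + fz) * (T - real (card L))\<bar> \<le> dr * E1"
  proof -
    have "\<bar>n_mult d r / (1 + fz) * (T - real (card L))\<bar> = \<bar>n_mult d r / (1 + fz)\<bar> * \<bar>real (card L) - T\<bar>"
      by (simp add: abs_mult abs_minus_commute)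
    also have "\<dots> \<le> dr * E1" using nmb H1 by (intro mult_mono) (auto simp: dr_def)
    finally show ?thesis .
  qed
  have "(\<Sum>K\<in>L. a' K) - n_mult d r / (1 + fz) * real (card L)
     = ((\<Sum>K\<in>U. a' K) - n_mult d r / (1 + fz) * T) + (\<Sum>K\<in>R. a' K)
       + n_mult d r / (1 + fz) * (T - real (card L))" (is "_ = ?rhs")
  proof -
    have gen: "(u + v) - q * n = (u - q * t) + v + q * (t - n)" for u v q n t :: real
      by (simp add: algebra_simps)
    show ?thesis unfolding sumL by (rule gen)
  qed
  note eq = this
  hence "\<bar>(\<Sum>K\<in>L. a' K) - n_mult d r / (1 + fz) * real (card L)\<bar> \<le> k * dr * E + dr * (E1 + T * fz + k * E) + dr * E1"
  proof -
    have tri: "\<bar>x + y + z\<bar> \<le> \<bar>x\<bar> + \<bar>y\<bar> + \<bar>z\<bar>" for x y z :: real by arith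
    show ?thesis unfolding eq using tri[of "(\<Sum>K\<in>U. a' K) - n_mult d r / (1 + fz) * T" "\<Sum>K\<in>R. a' K"
        "n_mult d r / (1 + fz) * (T - real (card L))"]
      by (rule order_trans) (intro add_mono step1 sumR step3)
  qed
  thus ?thesis unfolding a'_def k_def dr_def cls_def .
qed



lemma anal:
  fixes N S nm dr f0 Cf p A B X \<delta> \<gamma> k :: real
  assumes N0: "N \<ge> 0" and Sb: "\<bar>S\<bar> \<le> dr * N" and nmb: "\<bar>nm\<bar> \<le> dr" and dr0: "dr \<ge> 0"
    and f0: "f0 > 0" "f0 \<le> Cf / p" and p2: "p \<ge> 2" and A0: "A > 0" and B0: "B \<ge> 0"
    and d1: "0 < \<delta>" "\<delta> < 1" and g0: "\<gamma> > 0" and k0: "k \<ge> 0"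
    and Xp: "X > p powr ((1 + \<gamma>) / (1 - \<delta>))"
    and H1: "\<bar>N - A * X\<bar> \<le> B * X powr \<delta>"
    and main: "\<bar>S - nm / (1 + f0) * N\<bar> \<le> k * dr * (B * p powr \<gamma> * X powr \<delta>)
        + dr * (B * X powr \<delta> + A * X * f0 + k * (B * p powr \<gamma> * X powr \<delta>)) + dr * B * X powr \<delta>"
  shows "\<bar>S / N - nm / (1 + f0)\<bar> \<le> (2 * dr * (2 * k * B + 2 * B + A * Cf) / A + 4 * dr * B / A) / p"
proof -
  have p0: "p > 0" using p2 by simp
  have X0: "X > 0" using Xp p0 by (meson le_less_trans powr_ge_zero)
  have e: "(p powr ((1 + \<gamma>) / (1 - \<delta>))) powr (1 - \<delta>) = p powr (1 + \<gamma>)"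
    using d1 by (simp add: powr_powr)
  have X1: "X powr (1 - \<delta>) > p powr (1 + \<gamma>)"
    unfolding e[symmetric] using Xp d1 p0 by (intro powr_less_mono2) auto
  have pg: "p powr (1 + \<gamma>) = p * p powr \<gamma>" using p0 by (simp add: powr_add)
  have pg1: "p powr \<gamma> \<ge> 1" using p2 g0 by (simp add: ge_one_powr_ge_zero)
  have Xd: "X powr \<delta> = X / X powr (1 - \<delta>)" using X0 by (simp add: powr_diff)
  have Xpos: "X powr (1 - \<delta>) > 0" using X0 by simp
  have b1: "p powr \<gamma> * X powr \<delta> \<le> X / p"
  proof -
    have "p powr \<gamma> * X powr \<delta> = p powr \<gamma> * X / X powr (1 - \<delta>)" using Xd by simp
    also have "\<dots> \<le> p powr \<gamma> * X / (p * p powr \<gamma>)"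
      using X1 pg X0 p0 pg1 by (intro divide_left_mono) auto
    also have "\<dots> = X / p" using pg1 by simp
    finally show ?thesis .
  qed
  have b2: "X powr \<delta> \<le> X / p"
    using b1 pg1 by (smt (verit, best) mult_le_cancel_right1 powr_ge_zero)
  have fX: "A * X * f0 \<le> A * X * (Cf / p)" using f0 A0 X0 by (intro mult_left_mono) auto
  define D where "D = X / p * (dr * (2 * k * B + 2 * B + A * Cf))"
  have mainD: "\<bar>S - nm / (1 + f0) * N\<bar> \<le> D"
  proof -
    have "k * dr * (B * p powr \<gamma> * X powr \<delta>) \<le> k * dr * (B * (X / p))"
    proof -
      have "B * (p powr \<gamma> * X powr \<delta>) \<le> B * (X / p)" using b1 B0 by (rule mult_left_mono)
      hence "(k * dr) * (B * (p powr \<gamma> * X powr \<delta>)) \<le> (k * dr) * (B * (X / p))"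
        using k0 dr0 by (metis mult_left_mono zero_le_mult_iff)
      thus ?thesis by (simp add: mult.assoc)
    qed
    moreover have "dr * (B * X powr \<delta> + A * X * f0 + k * (B * p powr \<gamma> * X powr \<delta>))
       \<le> dr * (B * (X / p) + A * X * (Cf / p) + k * (B * (X / p)))"
    proof -
      have q1: "B * X powr \<delta> \<le> B * (X / p)" using b2 B0 by (rule mult_left_mono)
      have q2: "B * (p powr \<gamma> * X powr \<delta>) \<le> B * (X / p)" using b1 B0 by (rule mult_left_mono)
      have q3: "k * (B * p powr \<gamma> * X powr \<delta>) \<le> k * (B * (X / p))"
        using mult_left_mono[OF q2 k0] by (simp add: mult.assoc)
      have "B * X powr \<delta> + A * X * f0 + k * (B * p powr \<gamma> * X powr \<delta>)
         \<le> B * (X / p) + A * X * (Cf / p) + k * (B * (X / p))" using q1 q3 fX by linarith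
      thus ?thesis using dr0 by (rule mult_left_mono)
    qed
    moreover have "dr * B * X powr \<delta> \<le> dr * B * (X / p)"
      using mult_left_mono[OF b2, of "dr * B"] dr0 B0 by simp
    ultimately have "\<bar>S - nm / (1 + f0) * N\<bar> \<le> k * dr * (B * (X / p))
       + dr * (B * (X / p) + A * X * (Cf / p) + k * (B * (X / p))) + dr * B * (X / p)"
      using main by linarith
    also have "\<dots> = D" unfolding D_def by (simp add: algebra_simps)
    finally show ?thesis .
  qed
  show ?thesis
  proof (cases "N \<ge> A * X / 2")
    case True
    have AX: "A * X > 0" using A0 X0 by simp
    have Npos: "N > 0" using True AX by linarith
    have D0: "0 \<le> D" using mainD by linarith
    have "\<bar>S / N - nm / (1 + f0)\<bar> = \<bar>S - nm / (1 + f0) * N\<bar> / N"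
      using Npos by (simp add: field_simps)
    also have "\<dots> \<le> D / (A * X / 2)"
      by (rule frac_le) (use D0 mainD True AX in auto)
    also have "\<dots> = 2 * dr * (2 * k * B + 2 * B + A * Cf) / A / p"
      unfolding D_def using A0 X0 p0 by (simp add: field_simps)
    also have "\<dots> \<le> (2 * dr * (2 * k * B + 2 * B + A * Cf) / A + 4 * dr * B / A) / p"
    proof -
      have "0 \<le> 4 * dr * B / A" using dr0 B0 A0 by simp
      hence "2 * dr * (2 * k * B + 2 * B + A * Cf) / A \<le> 2 * dr * (2 * k * B + 2 * B + A * Cf) / A + 4 * dr * B / A"
        by linarith
      thus ?thesis using p0 by (intro divide_right_mono) auto
    qed
    finally show ?thesis .
  next
    case False
    have "A * X / 2 < B * X powr \<delta>" using False H1 by linarith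
    hence "A * X powr (1 - \<delta>) / 2 < B" using Xd Xpos X0 by (simp add: field_simps)
    moreover have "p \<le> X powr (1 - \<delta>)"
    proof -
      have "p * 1 \<le> p * p powr \<gamma>" using pg1 p0 by (intro mult_left_mono) auto
      thus ?thesis using X1 pg by linarith
    qed
    ultimately have pB: "A * p < 2 * B"
    proof -
      assume a1: "A * X powr (1 - \<delta>) / 2 < B" and a2: "p \<le> X powr (1 - \<delta>)"
      have "A * p \<le> A * X powr (1 - \<delta>)" using a2 A0 by (intro mult_left_mono) auto
      thus ?thesis using a1 by linarith
    qed
    have l1: "\<bar>S / N\<bar> \<le> dr"
    proof (cases "N = 0")
      case True thus ?thesis using dr0 by simp
    next
      case False
      hence "N > 0" using N0 by simp
      hence "\<bar>S\<bar> / N \<le> dr" using Sb by (simp add: pos_divide_le_eq)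
      thus ?thesis using abs_div_pos[OF \<open>N > 0\<close>, of S] by simp
    qed
    have l2: "\<bar>nm / (1 + f0)\<bar> \<le> dr"
    proof -
      have "\<bar>nm / (1 + f0)\<bar> = \<bar>nm\<bar> / (1 + f0)" using f0 by simp
      also have "\<dots> \<le> \<bar>nm\<bar>"
      proof -
        have "\<bar>nm\<bar> * 1 \<le> \<bar>nm\<bar> * (1 + f0)" using f0 by (intro mult_left_mono) auto
        moreover have "1 + f0 > 0" using f0 by simp
        ultimately show ?thesis by (simp add: pos_divide_le_eq)
      qed
      finally show ?thesis using nmb by simp
    qed
    have "\<bar>S / N - nm / (1 + f0)\<bar> \<le> 2 * dr" using l1 l2 by linarith
    also have "\<dots> \<le> (4 * dr * B / A) / p"
    proof -
      have "dr * (A * p) \<le> dr * (2 * B)" using pB dr0 by (intro mult_left_mono) auto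
      hence h: "2 * dr * (A * p) \<le> 4 * dr * B" by linarith
      have Ap: "A * p > 0" using A0 p0 by simp
      have "(4 * dr * B / A) / p = 4 * dr * B / (A * p)" by simp
      moreover have "2 * dr \<le> 4 * dr * B / (A * p)" using h Ap by (simp add: pos_le_divide_eq)
      ultimately show ?thesis by simp
    qed
    also have "\<dots> \<le> (2 * dr * (2 * k * B + 2 * B + A * Cf) / A + 4 * dr * B / A) / p"
    proof -
      have "Cf / p > 0" using f0 by linarith
      hence Cf0: "Cf > 0" using p0 by (simp add: zero_less_divide_iff)
      have "0 \<le> 2 * dr * (2 * k * B + 2 * B + A * Cf) / A"
        using dr0 k0 B0 A0 Cf0 by simp
      hence "4 * dr * B / A \<le> 2 * dr * (2 * k * B + 2 * B + A * Cf) / A + 4 * dr * B / A" by linarith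
      thus ?thesis by (rule divide_right_mono) (use p0 in simp)
    qed
    finally show ?thesis .
  qed
qed



theorem mainTheorem7:
  fixes d r :: nat and \<delta> \<gamma> A B Cf :: real
  assumes "d \<ge> 2" and "r > 0" and "0 < \<delta>" and "\<delta> < 1" and "\<gamma> > 0" and "A > 0"
  shows "\<exists>M::real. \<forall>(F :: 'k set) (disc :: 'k \<Rightarrow> real) (a :: 'k \<Rightarrow> nat \<Rightarrow> int)
            (unram :: 'k \<Rightarrow> nat \<Rightarrow> bool) (frob :: 'k \<Rightarrow> nat \<Rightarrow> (nat \<Rightarrow> nat))
            (ramtype :: 'k \<Rightarrow> nat \<Rightarrow> nat) (w :: nat) (f :: nat \<Rightarrow> real)
            (c :: nat \<Rightarrow> nat \<Rightarrow> real).
     ( \<comment> \<open>f(p) = O(1/p) positive; c_i(p) > 0 with sum f(p)\<close>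
       (\<forall>p. prime p \<longrightarrow> 0 < f p \<and> f p \<le> Cf / real p)
     \<and> (\<forall>p. prime p \<longrightarrow> (\<forall>i\<in>{1..w}. c i p > 0) \<and> (\<Sum>i=1..w. c i p) = f p)
       \<comment> \<open>local data of the fields\<close>
     \<and> (\<forall>K\<in>F. \<forall>p. prime p \<longrightarrow>
            (unram K p \<longrightarrow> frob K p \<in> Sym d \<and> a K p = chi_std d (frob K p))
          \<and> (\<not> unram K p \<longrightarrow> ramtype K p \<in> {1..w})
          \<and> -1 \<le> a K p \<and> a K p \<le> int d)
     \<and> (\<forall>X. finite (Lset F disc X))
       \<comment> \<open>(H1)\<close>
     \<and> (\<forall>X\<ge>1. \<bar>real (card (Lset F disc X)) - A * X\<bar> \<le> B * X powr \<delta>)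
       \<comment> \<open>(H2)\<close>
     \<and> (\<forall>(S :: nat set) (cnd :: nat \<Rightarrow> loccond) X.
           finite S \<and> (\<forall>q\<in>S. prime q \<and> valid_cond d w (cnd q)) \<and> X \<ge> 1 \<longrightarrow>
           \<bar>real (card {K \<in> Lset F disc X. \<forall>q\<in>S. sat_cond unram frob ramtype K q (cnd q)})
              - (\<Prod>q\<in>S. cond_weight d f c q (cnd q)) * A * X\<bar>
             \<le> B * (real (\<Prod>q\<in>S. q)) powr \<gamma> * X powr \<delta>))
     \<longrightarrow> (\<forall>(p::nat) (X::real). prime p \<and> X > real p powr ((1 + \<gamma>) / (1 - \<delta>)) \<longrightarrow>
            \<bar>(\<Sum>K\<in>Lset F disc X. real_of_int (a K p) ^ r) / real (card (Lset F disc X))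
               - n_mult d r / (1 + f p)\<bar> \<le> M / real p)"
proof -
  define k where "k = real (card (conj_classes d))"
  define dr where "dr = real d ^ r"
  have k0: "k \<ge> 0" unfolding k_def by simp
  have dr0: "dr \<ge> 0" unfolding dr_def by simp
  have d1: "d \<ge> 1" using assms by simp
  show ?thesis
  proof (rule exI[of _ "2 * dr * (2 * k * B + 2 * B + A * Cf) / A + 4 * dr * B / A"], intro allI impI)
    fix F :: "'k set" and disc :: "'k \<Rightarrow> real" and a :: "'k \<Rightarrow> nat \<Rightarrow> int"
      and unram :: "'k \<Rightarrow> nat \<Rightarrow> bool" and frob :: "'k \<Rightarrow> nat \<Rightarrow> (nat \<Rightarrow> nat)"
      and ramtype :: "'k \<Rightarrow> nat \<Rightarrow> nat" and w :: nat and f :: "nat \<Rightarrow> real"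
      and c :: "nat \<Rightarrow> nat \<Rightarrow> real" and p :: nat and X :: real
    assume hyp: "(\<forall>p. prime p \<longrightarrow> 0 < f p \<and> f p \<le> Cf / real p)
     \<and> (\<forall>p. prime p \<longrightarrow> (\<forall>i\<in>{1..w}. c i p > 0) \<and> (\<Sum>i=1..w. c i p) = f p)
     \<and> (\<forall>K\<in>F. \<forall>p. prime p \<longrightarrow>
            (unram K p \<longrightarrow> frob K p \<in> Sym d \<and> a K p = chi_std d (frob K p))
          \<and> (\<not> unram K p \<longrightarrow> ramtype K p \<in> {1..w})
          \<and> -1 \<le> a K p \<and> a K p \<le> int d)
     \<and> (\<forall>X. finite (Lset F disc X))
     \<and> (\<forall>X\<ge>1. \<bar>real (card (Lset F disc X)) - A * X\<bar> \<le> B * X powr \<delta>)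
     \<and> (\<forall>(S :: nat set) (cnd :: nat \<Rightarrow> loccond) X.
           finite S \<and> (\<forall>q\<in>S. prime q \<and> valid_cond d w (cnd q)) \<and> X \<ge> 1 \<longrightarrow>
           \<bar>real (card {K \<in> Lset F disc X. \<forall>q\<in>S. sat_cond unram frob ramtype K q (cnd q)})
              - (\<Prod>q\<in>S. cond_weight d f c q (cnd q)) * A * X\<bar>
             \<le> B * (real (\<Prod>q\<in>S. q)) powr \<gamma> * X powr \<delta>)"
    assume pX: "prime p \<and> X > real p powr ((1 + \<gamma>) / (1 - \<delta>))"
    define L where "L = Lset F disc X"
    note hf = hyp[THEN conjunct1]
    note hloc = hyp[THEN conjunct2, THEN conjunct2, THEN conjunct1]
    note hfin = hyp[THEN conjunct2, THEN conjunct2, THEN conjunct2, THEN conjunct1]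
    note hH1 = hyp[THEN conjunct2, THEN conjunct2, THEN conjunct2, THEN conjunct2, THEN conjunct1]
    note H2all = hyp[THEN conjunct2, THEN conjunct2, THEN conjunct2, THEN conjunct2, THEN conjunct2]
    have pp: "prime p" and Xp: "X > real p powr ((1 + \<gamma>) / (1 - \<delta>))" using pX by auto
    have p2: "real p \<ge> 2" using prime_ge_2_nat[OF pp] by simp
    have X1: "X \<ge> 1"
    proof -
      have "real p powr ((1 + \<gamma>) / (1 - \<delta>)) \<ge> 1"
        using p2 assms by (intro ge_one_powr_ge_zero) auto
      thus ?thesis using Xp by linarith
    qed
    have finL: "finite L" unfolding L_def using hfin by blast
    have H1: "\<bar>real (card L) - A * X\<bar> \<le> B * X powr \<delta>" unfolding L_def using hH1 X1 by blast
    have B0: "B \<ge> 0"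
    proof -
      have "0 \<le> B * X powr \<delta>" using H1 by linarith
      moreover have "X powr \<delta> > 0" using X1 by simp
      ultimately show ?thesis by (simp add: zero_le_mult_iff)
    qed
    have f0: "0 < f p" "f p \<le> Cf / real p" using hf pp by auto
    have loc: "\<forall>K\<in>L. (unram K p \<longrightarrow> frob K p \<in> Sym d \<and> a K p = chi_std d (frob K p))
                    \<and> -1 \<le> a K p \<and> a K p \<le> int d"
      using hloc pp unfolding L_def Lset_def by blast
    have H2: "\<forall>C\<in>conj_classes d. \<bar>real (card {K\<in>L. unram K p \<and> frob K p \<in> C})
                 - real (card C) / (fact (d+1) * (1 + f p)) * (A * X)\<bar> \<le> B * real p powr \<gamma> * X powr \<delta>"
    proof
      fix C assume C: "C \<in> conj_classes d"
      have hh: "\<bar>real (card {K \<in> L. \<forall>q\<in>{p}. sat_cond unram frob ramtype K q ((\<lambda>_. Unr C) q)})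
              - (\<Prod>q\<in>{p}. cond_weight d f c q ((\<lambda>_. Unr C) q)) * A * X\<bar>
             \<le> B * (real (\<Prod>q\<in>{p}. q)) powr \<gamma> * X powr \<delta>"
        using H2all[rule_format, of "{p}" "\<lambda>_. Unr C" X] C pp X1 unfolding L_def valid_cond_def by simp
      thus "\<bar>real (card {K\<in>L. unram K p \<and> frob K p \<in> C})
                 - real (card C) / (fact (d+1) * (1 + f p)) * (A * X)\<bar> \<le> B * real p powr \<gamma> * X powr \<delta>"
        by (simp add: sat_cond_def cond_weight_def mult.assoc)
    qed
    have T0: "A * X \<ge> 0" using assms(6) X1 by simp
    have main: "\<bar>(\<Sum>K\<in>L. real_of_int (a K p) ^ r) - n_mult d r / (1 + f p) * real (card L)\<bar>
     \<le> k * dr * (B * real p powr \<gamma> * X powr \<delta>)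
        + dr * (B * X powr \<delta> + A * X * f p + k * (B * real p powr \<gamma> * X powr \<delta>)) + dr * (B * X powr \<delta>)"
      unfolding k_def dr_def
      by (rule alg[where L=L and a=a and unram=unram and frob=frob and p=p and d=d and fz="f p" and T="A * X" and r=r, OF d1 finL f0(1) T0 loc H2 H1])
    have main2: "\<bar>(\<Sum>K\<in>L. real_of_int (a K p) ^ r) - n_mult d r / (1 + f p) * real (card L)\<bar>
     \<le> k * dr * (B * real p powr \<gamma> * X powr \<delta>)
        + dr * (B * X powr \<delta> + A * X * f p + k * (B * real p powr \<gamma> * X powr \<delta>)) + dr * B * X powr \<delta>"
      using main by (simp only: mult.assoc)
    have N0: "real (card L) \<ge> 0" by simp
    have Sb: "\<bar>\<Sum>K\<in>L. real_of_int (a K p) ^ r\<bar> \<le> dr * real (card L)"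
      unfolding dr_def using S_bound[OF _ d1, of L a p r] loc by blast
    have nmb: "\<bar>n_mult d r\<bar> \<le> dr" unfolding dr_def by (rule nm_bound[OF d1])
    have "\<bar>(\<Sum>K\<in>L. real_of_int (a K p) ^ r) / real (card L) - n_mult d r / (1 + f p)\<bar>
       \<le> (2 * dr * (2 * k * B + 2 * B + A * Cf) / A + 4 * dr * B / A) / real p"
      by (rule anal[OF N0 Sb nmb dr0 f0 p2 assms(6) B0 assms(3,4,5) k0 Xp H1 main2])
    thus "\<bar>(\<Sum>K\<in>Lset F disc X. real_of_int (a K p) ^ r) / real (card (Lset F disc X))
               - n_mult d r / (1 + f p)\<bar> \<le> (2 * dr * (2 * k * B + 2 * B + A * Cf) / A + 4 * dr * B / A) / real p"
      unfolding L_def .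
  qed
qed


end
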